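(* Consider any $(M,N)$-VLFT code for a $K$-user DM-BC, and fix $j\in\{1,\dots,K\}$ with $P_{Y_j|X}(y|x)>0$ for all $x\in\mathcal X$, $y\in\mathcal Y_j$. Then for every $n\ge0$, every $y\in\mathcal Y_j$ and every realization $y_j^n$ of $Y_j^n$ with $\mathbb P(Y_j^n=y_j^n)>0$ and $\mathcal H(W|Y_j^n=y_j^n)>0$, $$\ln\mathcal H(W|Y_j^n=y_j^n)-\ln\mathcal H(W|Y_j^{n+1}=(y_j^n,y))\le\ln T_j.$$
   Context: A $K$-user discrete memoryless broadcast channel (DM-BC) consists of a finite input alphabet $\mathcal X$, finite output alphabets $\mathcal Y_1,\dots,\mathcal Y_K$ and a transition law $P_{Y_1,\dots,Y_K|X}$; $P_{Y_j|X}$ denotes its $j$-th marginal. Logarithms are natural. An $(M,N)$-VLFT code ($M$ a positive integer, $N>0$ real) consists of: a message $W$ uniform on $\mathcal W=\{1,\dots,M\}$; encoders $f_n:\mathcal W\times\mathcal Y_1^{n-1}\times\cdots\times\mathcal Y_K^{n-1}\to\mathcal X$, $n\ge1$, with $X_n=f_n(W,Y_1^{n-1},\dots,Y_K^{n-1})$, where given $(W,X^n,Y_1^{n-1},\dots,Y_K^{n-1})$ the tuple $(Y_{1,n},\dots,Y_{K,n})$ is distributed as $P_{Y_1,\dots,Y_K|X}(\cdot|X_n)$; decoders $g^{(j)}_n:\mathcal Y_j^n\to\mathcal W$; for each $j$ a stopping time $\tau_j$ of the filtration $\{\sigma(Y_j^n)\}_{n\ge0}$, with $\tau=\max_j\tau_j$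 satisfying $\mathbb E[\tau]\le N$. For a realization $z$ of a random vector $Z$, $\mathcal H(W|Z=z):=-\sum_{w\in\mathcal W}\mathbb P(W=w|Z=z)\ln\mathbb P(W=w|Z=z)$. $T_j=\max_{x,x'\in\mathcal X,\,y\in\mathcal Y_j}\frac{P_{Y_j|X}(y|x)}{P_{Y_j|X}(y|x')}$. *)

theory Defs
  imports Complex_Main "HOL-Library.Extended_Nonnegative_Real"
begin

(* The output alphabet of user j is the
   finite set Y j (a subset of a common carrier type 'y); the input alphabet
   is the finite type 'x.  A channel output tuple (y_1,...,y_K) is an
   extensional function in PiE {1..K} Y.  PY x ys = P_{Y_1..Y_K|X}(ys|x). *)

definition dmbc :: "nat \<Rightarrow> (nat \<Rightarrow> 'y set) \<Rightarrow> ('x::finite \<Rightarrow> (nat \<Rightarrow> 'y) \<Rightarrow> real) \<Rightarrow> bool" where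
  "dmbc K Y PY \<longleftrightarrow>
     (\<forall>j\<in>{1..K}. finite (Y j)) \<and>
     (\<forall>x ys. 0 \<le> PY x ys) \<and>
     (\<forall>x. (\<Sum>ys\<in>PiE {1..K} Y. PY x ys) = 1)"

definition marg :: "nat \<Rightarrow> (nat \<Rightarrow> 'y set) \<Rightarrow> ('x \<Rightarrow> (nat \<Rightarrow> 'y) \<Rightarrow> real) \<Rightarrow> nat \<Rightarrow> 'x \<Rightarrow> 'y \<Rightarrow> real" where
  "marg K Y PY j x y = (\<Sum>ys\<in>{ys\<in>PiE {1..K} Y. ys j = y}. PY x ys)"

definition Tconst :: "nat \<Rightarrow> (nat \<Rightarrow> 'y set) \<Rightarrow> ('x::finite \<Rightarrow> (nat \<Rightarrow> 'y) \<Rightarrow> real) \<Rightarrow> nat \<Rightarrow> real" where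
  "Tconst K Y PY j = Max {marg K Y PY j x y / marg K Y PY j x' y | x x' y. y \<in> Y j}"

text \<open>Joint output histories of length n: (Y_1^n,...,Y_K^n), stored time-wise.\<close>
definition hists :: "nat \<Rightarrow> (nat \<Rightarrow> 'y set) \<Rightarrow> nat \<Rightarrow> (nat \<Rightarrow> 'y) list set" where
  "hists K Y n = {hs. length hs = n \<and> set hs \<subseteq> PiE {1..K} Y}"

definition proj :: "nat \<Rightarrow> (nat \<Rightarrow> 'y) list \<Rightarrow> 'y list" where
  "proj j hs = map (\<lambda>ys. ys j) hs"

text \<open>Encoder: f n w h = X_n for n \<ge> 1, where h is the joint feedback history
  (Y_1^{n-1},...,Y_K^{n-1}).  pjoint gives P(Y_1^n..Y_K^n = hs | W = w).\<close>
definition pjoint :: "('x \<Rightarrow> (nat \<Rightarrow> 'y) \<Rightarrow> real) \<Rightarrow> (nat \<Rightarrow> nat \<Rightarrow> (nat \<Rightarrow> 'y) list \<Rightarrow> 'x)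
    \<Rightarrow> nat \<Rightarrow> (nat \<Rightarrow> 'y) list \<Rightarrow> real" where
  "pjoint PY f w hs = (\<Prod>t<length hs. PY (f (Suc t) w (take t hs)) (hs ! t))"

text \<open>P(W = w, Y_j^n = yj), W uniform on {1..M}.\<close>
definition pWY :: "nat \<Rightarrow> (nat \<Rightarrow> 'y set) \<Rightarrow> ('x \<Rightarrow> (nat \<Rightarrow> 'y) \<Rightarrow> real) \<Rightarrow> (nat \<Rightarrow> nat \<Rightarrow> (nat \<Rightarrow> 'y) list \<Rightarrow> 'x)
    \<Rightarrow> nat \<Rightarrow> nat \<Rightarrow> nat \<Rightarrow> 'y list \<Rightarrow> real" where
  "pWY K Y PY f M j w yj =
     (\<Sum>hs\<in>{hs\<in>hists K Y (length yj). proj j hs = yj}. pjoint PY f w hs) / real M"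

definition pY :: "nat \<Rightarrow> (nat \<Rightarrow> 'y set) \<Rightarrow> ('x \<Rightarrow> (nat \<Rightarrow> 'y) \<Rightarrow> real) \<Rightarrow> (nat \<Rightarrow> nat \<Rightarrow> (nat \<Rightarrow> 'y) list \<Rightarrow> 'x)
    \<Rightarrow> nat \<Rightarrow> nat \<Rightarrow> 'y list \<Rightarrow> real" where
  "pY K Y PY f M j yj = (\<Sum>w\<in>{1..M}. pWY K Y PY f M j w yj)"

text \<open>Conditional entropy H(W | Y_j^n = yj) (natural log; 0 ln 0 = 0).\<close>
definition condH :: "nat \<Rightarrow> (nat \<Rightarrow> 'y set) \<Rightarrow> ('x \<Rightarrow> (nat \<Rightarrow> 'y) \<Rightarrow> real) \<Rightarrow> (nat \<Rightarrow> nat \<Rightarrow> (nat \<Rightarrow> 'y) list \<Rightarrow> 'x)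
    \<Rightarrow> nat \<Rightarrow> nat \<Rightarrow> 'y list \<Rightarrow> real" where
  "condH K Y PY f M j yj =
     - (\<Sum>w\<in>{1..M}. let p = pWY K Y PY f M j w yj / pY K Y PY f M j yj in p * ln p)"

text \<open>Stopping times: stop j m ys means "tau_j = m is reached at time m given Y_j^m = ys";
  tau_j = LEAST m. stop j m (Y_j^m), which is an arbitrary stopping time of the
  filtration of Y_j.  P(tau > n) with tau = max_j tau_j.\<close>
definition p_tau_gt :: "nat \<Rightarrow> (nat \<Rightarrow> 'y set) \<Rightarrow> ('x \<Rightarrow> (nat \<Rightarrow> 'y) \<Rightarrow> real) \<Rightarrow> (nat \<Rightarrow> nat \<Rightarrow> (nat \<Rightarrow> 'y) list \<Rightarrow> 'x)
    \<Rightarrow> nat \<Rightarrow> (nat \<Rightarrow> nat \<Rightarrow> 'y list \<Rightarrow> bool) \<Rightarrow> nat \<Rightarrow> real" where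
  "p_tau_gt K Y PY f M stop n =
     (\<Sum>w\<in>{1..M}. \<Sum>hs\<in>{hs\<in>hists K Y n. \<exists>j\<in>{1..K}. \<forall>m\<le>n. \<not> stop j m (take m (proj j hs))}.
        pjoint PY f w hs) / real M"

text \<open>(M,N)-VLFT code (f encoders, g decoders g j n : Y_j^n -> W, stopping rules stop),
  with E[tau] = sum_n P(tau > n) <= N.\<close>
definition vlft_code :: "nat \<Rightarrow> (nat \<Rightarrow> 'y set) \<Rightarrow> ('x \<Rightarrow> (nat \<Rightarrow> 'y) \<Rightarrow> real) \<Rightarrow> nat \<Rightarrow> real
    \<Rightarrow> (nat \<Rightarrow> nat \<Rightarrow> (nat \<Rightarrow> 'y) list \<Rightarrow> 'x) \<Rightarrow> (nat \<Rightarrow> nat \<Rightarrow> 'y list \<Rightarrow> nat)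
    \<Rightarrow> (nat \<Rightarrow> nat \<Rightarrow> 'y list \<Rightarrow> bool) \<Rightarrow> bool" where
  "vlft_code K Y PY M N f g stop \<longleftrightarrow>
     1 \<le> M \<and> 0 < N \<and>
     (\<forall>j\<in>{1..K}. \<forall>n ys. length ys = n \<and> set ys \<subseteq> Y j \<longrightarrow> g j n ys \<in> {1..M}) \<and>
     (\<Sum>n. ennreal (p_tau_gt K Y PY f M stop n)) \<le> ennreal N"

end

theory Submission
  imports Defs
begin

lemma G_mono:
  fixes t s :: real
  assumes "0 < t" "t \<le> s" "s < 1"
  shows "- t * ln t / (1 - t) \<le> - s * ln s / (1 - s)"
proof (rule DERIV_nonneg_imp_increasing_open[OF assms(2)])
  fix x :: real assume x: "t < x" "x < s"
  hence x0: "0 < x" "x < 1" using assms by auto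
  have d1: "DERIV (\<lambda>x. - x * ln x) x :> (- 1 * ln x + inverse x * - x)"
    by (rule DERIV_mult[OF DERIV_minus[OF DERIV_ident] DERIV_ln[OF x0(1)]])
  have d1': "DERIV (\<lambda>x. - x * ln x) x :> (- ln x - 1)"
  proof -
    have "- 1 * ln x + inverse x * - x = - ln x - 1" using x0 by (simp add: field_simps)
    thus ?thesis using d1 by simp
  qed
  have d2: "DERIV (\<lambda>x. 1 - x) x :> (0 - 1)" by (intro DERIV_diff DERIV_const DERIV_ident)
  have d: "DERIV (\<lambda>x. - x * ln x / (1 - x)) x :> (((- ln x - 1) * (1 - x) - (- x * ln x) * (0 - 1)) / ((1 - x) * (1 - x)))"
    using x0 by (intro DERIV_divide[OF d1' d2]) simp
  moreover have "((- ln x - 1) * (1 - x) - (- x * ln x) * (0 - 1)) / ((1 - x) * (1 - x)) \<ge> 0"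
  proof -
    have e: "((- ln x - 1) * (1 - x) - (- x * ln x) * (0 - 1)) = (x - 1) - ln x" by (simp add: algebra_simps)
    have "ln x \<le> x - 1" using ln_le_minus_one x0 by simp
    hence "0 \<le> (x - 1) - ln x" by simp
    thus ?thesis unfolding e by simp
  qed
  ultimately show "\<exists>y. DERIV (\<lambda>x. - x * ln x / (1 - x)) x :> y \<and> 0 \<le> y" by blast
next
  show "continuous_on {t..s} (\<lambda>x. - x * ln x / (1 - x))"
    using assms by (intro continuous_intros) auto
qed
lemma pointwise:
  fixes t s T :: real
  assumes "0 \<le> t" "t \<le> 1" "0 \<le> s" "s \<le> 1" "1 \<le> T" "t \<le> T * s" "1 - t \<le> T * (1 - s)"
  shows "- (t * ln t) \<le> T * (- (s * ln s))"
proof -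
  have ps: "0 \<le> - (s * ln s)"
    using assms by (cases "s = 0") (auto simp: mult_nonneg_nonpos)
  show ?thesis
  proof (cases "t = 0")
    case True thus ?thesis using ps assms by (simp add: mult_nonneg_nonpos)
  next
    case t0: False
    hence tp: "0 < t" using assms by simp
    show ?thesis
    proof (cases "s \<le> t")
      case True
      have sp: "0 < s"
      proof (rule ccontr)
        assume "\<not> 0 < s" hence "s = 0" using assms by simp
        thus False using tp assms by simp
      qed
      have "ln s \<le> ln t" using True sp by simp
      hence "- (s * ln t) \<le> - (s * ln s)" using sp by (simp add: mult_left_mono)
      hence "T * (- (s * ln t)) \<le> T * (- (s * ln s))" using assms by (simp add: mult_left_mono)
      moreover have "t * (- ln t) \<le> (T * s) * (- ln t)"
        using assms tp by (intro mult_right_mono) auto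
      ultimately show ?thesis by (simp add: algebra_simps)
    next
      case False
      have s1: "s < 1"
      proof (rule ccontr)
        assume "\<not> s < 1" hence "s = 1" using assms by simp
        thus False using False assms by simp
      qed
      have t1: "t < 1" using False s1 by simp
      let ?G = "\<lambda>x::real. - x * ln x / (1 - x)"
      have G: "?G t \<le> ?G s" using G_mono[of t s] tp False s1 by simp
      have Gt0: "0 \<le> ?G t"
      proof -
        have "ln t \<le> 0" using tp t1 by simp
        hence "0 \<le> - t * ln t" using tp by (simp add: mult_nonneg_nonpos)
        moreover have "0 < 1 - t" using t1 by simp
        ultimately show ?thesis by (rule divide_nonneg_pos)
      qed
      have e1: "- (t * ln t) = ?G t * (1 - t)" using t1 by (simp add: field_simps)
      have e2: "- (s * ln s) = ?G s * (1 - s)" using s1 by (simp add: field_simps)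
      have "- (t * ln t) = ?G t * (1 - t)" by (rule e1)
      also have "?G t * (1 - t) \<le> ?G t * (T * (1 - s))" by (rule mult_left_mono[OF assms(7) Gt0])
      also have "\<dots> \<le> ?G s * (T * (1 - s))"
      proof (rule mult_right_mono[OF G])
        show "0 \<le> T * (1 - s)" using s1 assms(5) by (intro mult_nonneg_nonneg) auto
      qed
      also have "\<dots> = T * (?G s * (1 - s))" by (simp only: mult_ac)
      also have "\<dots> = T * - (s * ln s)" by (simp only: e2)
      finally show ?thesis .
    qed
  qed
qed


lemma helper_ratio:
  fixes a' b' A B m Mx T :: real
  assumes "0 \<le> a'" "m * a' \<le> b'" "B \<le> Mx * A" "0 < A" "0 < B" "0 < m" "Mx / m \<le> T"
  shows "a' / A \<le> T * (b' / B)"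
proof -
  have Mx: "0 < Mx"
  proof (rule ccontr)
    assume "\<not> 0 < Mx" hence "Mx * A \<le> 0" using assms by (simp add: mult_nonpos_nonneg)
    thus False using assms by linarith
  qed
  have "m * a' / (Mx * A) \<le> b' / B"
  proof -
    have "m * a' / (Mx * A) \<le> m * a' / B" using assms by (intro divide_left_mono) auto
    also have "\<dots> \<le> b' / B" using assms by (intro divide_right_mono) auto
    finally show ?thesis .
  qed
  moreover have "0 \<le> T"
  proof -
    have "0 < Mx / m" using assms Mx by simp
    thus ?thesis using assms by linarith
  qed
  ultimately have "(Mx / m) * (m * a' / (Mx * A)) \<le> T * (b' / B)"
    using assms Mx by (intro mult_mono) auto
  moreover have "(Mx / m) * (m * a' / (Mx * A)) = a' / A" using assms Mx by (simp add: field_simps)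
  ultimately show ?thesis by simp
qed

lemma ent_sum:
  fixes a b :: "nat \<Rightarrow> real"
  assumes fin: "finite S" and an: "\<forall>w\<in>S. 0 \<le> a w"
    and ab: "\<forall>w\<in>S. m * a w \<le> b w \<and> b w \<le> Mx * a w"
    and m: "0 < m" and T: "Mx / m \<le> T" and A: "0 < sum a S"
  shows "- (\<Sum>w\<in>S. let p = a w / sum a S in p * ln p) \<le> T * - (\<Sum>w\<in>S. let p = b w / sum b S in p * ln p)"
proof -
  define A where "A = sum a S"
  define B where "B = sum b S"
  have "m * A \<le> B" unfolding A_def B_def sum_distrib_left using ab by (intro sum_mono) auto
  moreover have "0 < m * A" using m A A_def by simp
  ultimately have Bp: "0 < B" by linarith
  have BA: "B \<le> Mx * A" unfolding A_def B_def sum_distrib_left using ab by (intro sum_mono) auto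
  have Ap: "0 < A" using A A_def by simp
  have "m * A \<le> Mx * A" using \<open>m * A \<le> B\<close> BA by linarith
  hence mMx: "m \<le> Mx" using Ap by (simp add: mult_le_cancel_right_pos)
  have "1 \<le> Mx / m" using mMx m by simp
  hence T1: "1 \<le> T" using T by linarith
  have bn: "\<forall>w\<in>S. 0 \<le> b w"
  proof
    fix w assume w: "w \<in> S"
    have "0 \<le> m * a w" using an m w by simp
    thus "0 \<le> b w" using ab w by (meson order_trans)
  qed
  have pw: "- (a w / A * ln (a w / A)) \<le> T * - (b w / B * ln (b w / B))" if w: "w \<in> S" for w
  proof (rule pointwise)
    show "0 \<le> a w / A" using an w Ap by simp
    show "a w / A \<le> 1" using member_le_sum[of w S a] an w fin Ap A_def by simp
    show "0 \<le> b w / B" using bn w Bp by simp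
    show "b w / B \<le> 1" using member_le_sum[of w S b] bn w fin Bp B_def by simp
    show "1 \<le> T" by (rule T1)
    show "a w / A \<le> T * (b w / B)"
      using helper_ratio[of "a w" m "b w" B Mx A T] an ab w BA Ap Bp m T by auto
    have eA: "A - a w = sum a (S - {w})" using sum_diff1[OF fin, of a w] w A_def by simp
    have eB: "B - b w = sum b (S - {w})" using sum_diff1[OF fin, of b w] w B_def by simp
    have "m * (A - a w) \<le> B - b w" unfolding eA eB sum_distrib_left using ab by (intro sum_mono) auto
    moreover have "0 \<le> A - a w" unfolding eA using an by (intro sum_nonneg) auto
    ultimately have "(A - a w) / A \<le> T * ((B - b w) / B)"
      using helper_ratio[of "A - a w" m "B - b w" B Mx A T] BA Ap Bp m T by auto
    moreover have "(A - a w) / A = 1 - a w / A" using Ap by (simp add: field_simps)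
    moreover have "(B - b w) / B = 1 - b w / B" using Bp by (simp add: field_simps)
    ultimately show "1 - a w / A \<le> T * (1 - b w / B)" by simp
  qed
  have "- (\<Sum>w\<in>S. let p = a w / A in p * ln p) = (\<Sum>w\<in>S. - (a w / A * ln (a w / A)))"
    by (simp add: sum_negf Let_def)
  also have "\<dots> \<le> (\<Sum>w\<in>S. T * - (b w / B * ln (b w / B)))" using pw by (intro sum_mono) auto
  also have "\<dots> = T * - (\<Sum>w\<in>S. let p = b w / B in p * ln p)"
    by (simp add: sum_distrib_left sum_negf Let_def)
  finally show ?thesis unfolding A_def B_def .
qed


lemma pjoint_snoc:
  "pjoint PY f w (h @ [ys]) = pjoint PY f w h * PY (f (Suc (length h)) w h) ys"
proof -
  have "(\<Prod>t<length h. PY (f (Suc t) w (take t (h @ [ys]))) ((h @ [ys]) ! t))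
      = (\<Prod>t<length h. PY (f (Suc t) w (take t h)) (h ! t))"
    by (intro prod.cong) (auto simp: nth_append)
  thus ?thesis unfolding pjoint_def by (simp add: prod.lessThan_Suc)
qed

lemma pWY_snoc:
  "pWY K Y PY f M j w (yj @ [y]) =
    (\<Sum>hs\<in>{hs\<in>hists K Y (length yj). proj j hs = yj}.
        pjoint PY f w hs * marg K Y PY j (f (Suc (length yj)) w hs) y) / real M"
proof -
  define S where "S = {hs\<in>hists K Y (length yj). proj j hs = yj}"
  define C where "C = {ys\<in>PiE {1..K} Y. ys j = y}"
  have seteq: "{hs\<in>hists K Y (length (yj @ [y])). proj j hs = yj @ [y]} = (\<lambda>(h, ys). h @ [ys]) ` (S \<times> C)"
  proof (rule set_eqI, rule iffI)
    fix hs assume hs: "hs \<in> {hs\<in>hists K Y (length (yj @ [y])). proj j hs = yj @ [y]}"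
    hence len: "length hs = Suc (length yj)" by (simp add: hists_def)
    then obtain h ys where hh: "hs = h @ [ys]" by (metis length_Suc_conv_rev)
    have "length h = length yj" using len hh by simp
    moreover have "proj j h = yj" "ys j = y" using hs hh by (auto simp: proj_def)
    moreover have "set h \<subseteq> PiE {1..K} Y" "ys \<in> PiE {1..K} Y" using hs hh by (auto simp: hists_def)
    ultimately show "hs \<in> (\<lambda>(h, ys). h @ [ys]) ` (S \<times> C)" unfolding S_def C_def hists_def hh
      by (intro image_eqI[of _ _ "(h, ys)"]) auto
  next
    fix hs assume "hs \<in> (\<lambda>(h, ys). h @ [ys]) ` (S \<times> C)"
    then obtain h ys where hh: "hs = h @ [ys]" and h: "h \<in> S" and ys: "ys \<in> C" by auto
    have "length h = length yj" "set h \<subseteq> PiE {1..K} Y" "proj j h = yj"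
      using h unfolding S_def hists_def by auto
    moreover have "ys \<in> PiE {1..K} Y" "ys j = y" using ys unfolding C_def by auto
    ultimately show "hs \<in> {hs\<in>hists K Y (length (yj @ [y])). proj j hs = yj @ [y]}"
      unfolding hh hists_def proj_def by simp
  qed
  have inj: "inj_on (\<lambda>(h, ys). h @ [ys]) (S \<times> C)"
    by (rule inj_onI) auto
  have "(\<Sum>hs\<in>{hs\<in>hists K Y (length (yj @ [y])). proj j hs = yj @ [y]}. pjoint PY f w hs)
      = (\<Sum>(h, ys)\<in>S \<times> C. pjoint PY f w (h @ [ys]))"
    unfolding seteq sum.reindex[OF inj] by (simp add: comp_def case_prod_unfold)
  also have "\<dots> = (\<Sum>h\<in>S. \<Sum>ys\<in>C. pjoint PY f w (h @ [ys]))"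
    by (simp add: sum.cartesian_product)
  also have "\<dots> = (\<Sum>h\<in>S. pjoint PY f w h * marg K Y PY j (f (Suc (length yj)) w h) y)"
  proof (intro sum.cong refl)
    fix h assume "h \<in> S"
    hence "length h = length yj" by (simp add: S_def hists_def)
    thus "(\<Sum>ys\<in>C. pjoint PY f w (h @ [ys])) = pjoint PY f w h * marg K Y PY j (f (Suc (length yj)) w h) y"
      by (simp add: pjoint_snoc marg_def C_def sum_distrib_left)
  qed
  finally show ?thesis unfolding pWY_def S_def by simp
qed

theorem lemma7:
  fixes K :: nat and Y :: "nat \<Rightarrow> 'y set" and PY :: "'x::finite \<Rightarrow> (nat \<Rightarrow> 'y) \<Rightarrow> real"
    and M :: nat and N :: real
    and f :: "nat \<Rightarrow> nat \<Rightarrow> (nat \<Rightarrow> 'y) list \<Rightarrow> 'x"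
    and g :: "nat \<Rightarrow> nat \<Rightarrow> 'y list \<Rightarrow> nat"
    and stop :: "nat \<Rightarrow> nat \<Rightarrow> 'y list \<Rightarrow> bool"
    and j n :: nat and y :: 'y and yj :: "'y list"
  assumes "dmbc K Y PY"
    and "vlft_code K Y PY M N f g stop"
    and "j \<in> {1..K}"
    and "\<forall>x. \<forall>y'\<in>Y j. marg K Y PY j x y' > 0"
    and "y \<in> Y j"
    and "length yj = n" and "set yj \<subseteq> Y j"
    and "pY K Y PY f M j yj > 0"
    and "condH K Y PY f M j yj > 0"
  shows "ln (condH K Y PY f M j yj) - ln (condH K Y PY f M j (yj @ [y])) \<le> ln (Tconst K Y PY j)"
proof -
  note dm = assms(1)[unfolded dmbc_def]
  have PYn: "\<And>x ys. 0 \<le> PY x ys" using dm by auto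
  have Yfin: "finite (Y j)" using dm assms(3) by auto
  define mg where "mg = (\<lambda>x. marg K Y PY j x y)"
  define mn where "mn = Min (range mg)"
  define mx where "mx = Max (range mg)"
  have mnin: "mn \<in> range mg" unfolding mn_def by (rule Min_in) auto
  have mxin: "mx \<in> range mg" unfolding mx_def by (rule Max_in) auto
  have mnle: "\<And>x. mn \<le> mg x" unfolding mn_def by (rule Min_le) auto
  have mxge: "\<And>x. mg x \<le> mx" unfolding mx_def by (rule Max_ge) auto
  have mnp: "0 < mn" using mnin assms(4,5) by (auto simp: mg_def)
  have Tge: "mx / mn \<le> Tconst K Y PY j"
  proof -
    obtain x1 x2 where "mx = mg x1" "mn = mg x2" using mnin mxin by auto
    hence mem: "mx / mn \<in> {marg K Y PY j x y / marg K Y PY j x' y | x x' y. y \<in> Y j}"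
      using assms(5) unfolding mg_def by blast
    have "{marg K Y PY j x y / marg K Y PY j x' y | x x' y. y \<in> Y j}
        \<subseteq> (\<lambda>(x, x', y). marg K Y PY j x y / marg K Y PY j x' y) ` (UNIV \<times> UNIV \<times> Y j)"
    proof
      fix z assume "z \<in> {marg K Y PY j x y / marg K Y PY j x' y | x x' y. y \<in> Y j}"
      then obtain x x' y' where "z = marg K Y PY j x y' / marg K Y PY j x' y'" "y' \<in> Y j" by blast
      thus "z \<in> (\<lambda>(x, x', y). marg K Y PY j x y / marg K Y PY j x' y) ` (UNIV \<times> UNIV \<times> Y j)"
        by (intro image_eqI[of _ _ "(x, x', y')"]) auto
    qed
    moreover have "finite ((\<lambda>(x, x', y). marg K Y PY j x y / marg K Y PY j x' y) ` (UNIV \<times> UNIV \<times> Y j))"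
      using Yfin by simp
    ultimately have "finite {marg K Y PY j x y / marg K Y PY j x' y | x x' y. y \<in> Y j}"
      by (rule finite_subset)
    thus ?thesis unfolding Tconst_def using mem by (rule Max_ge)
  qed
  have pjn: "\<And>w hs. 0 \<le> pjoint PY f w hs" unfolding pjoint_def by (intro prod_nonneg) (simp add: PYn)
  define a where "a = (\<lambda>w. pWY K Y PY f M j w yj)"
  define b where "b = (\<lambda>w. pWY K Y PY f M j w (yj @ [y]))"
  have an: "\<forall>w\<in>{1..M}. 0 \<le> a w" unfolding a_def pWY_def using pjn by (auto intro!: sum_nonneg divide_nonneg_nonneg)
  have ab: "\<forall>w\<in>{1..M}. mn * a w \<le> b w \<and> b w \<le> mx * a w"
  proof
    fix w
    let ?S = "{hs\<in>hists K Y (length yj). proj j hs = yj}"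
    have "mn * a w = (\<Sum>hs\<in>?S. pjoint PY f w hs * mn) / real M"
      unfolding a_def pWY_def by (simp add: sum_distrib_left mult.commute)
    also have "\<dots> \<le> b w" unfolding b_def pWY_snoc
      using pjn mnle by (intro divide_right_mono sum_mono mult_left_mono) (auto simp: mg_def)
    finally have 1: "mn * a w \<le> b w" .
    have "b w \<le> (\<Sum>hs\<in>?S. pjoint PY f w hs * mx) / real M" unfolding b_def pWY_snoc
      using pjn mxge by (intro divide_right_mono sum_mono mult_left_mono) (auto simp: mg_def)
    also have "\<dots> = mx * a w" unfolding a_def pWY_def by (simp add: sum_distrib_left mult.commute)
    finally show "mn * a w \<le> b w \<and> b w \<le> mx * a w" using 1 by simp
  qed
  have sa: "sum a {1..M} = pY K Y PY f M j yj" unfolding a_def pY_def by simp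
  have sb: "sum b {1..M} = pY K Y PY f M j (yj @ [y])" unfolding b_def pY_def by simp
  have E: "- (\<Sum>w\<in>{1..M}. let p = a w / sum a {1..M} in p * ln p) \<le> Tconst K Y PY j * - (\<Sum>w\<in>{1..M}. let p = b w / sum b {1..M} in p * ln p)"
    using assms(8) sa by (intro ent_sum[OF _ an ab mnp Tge]) auto
  have c1: "condH K Y PY f M j yj = - (\<Sum>w\<in>{1..M}. let p = a w / sum a {1..M} in p * ln p)"
    unfolding sa by (simp only: condH_def a_def)
  have c2: "condH K Y PY f M j (yj @ [y]) = - (\<Sum>w\<in>{1..M}. let p = b w / sum b {1..M} in p * ln p)"
    unfolding sb by (simp only: condH_def b_def)
  have key: "condH K Y PY f M j yj \<le> Tconst K Y PY j * condH K Y PY f M j (yj @ [y])"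
    using E unfolding c1 c2 .
  have mnmx: "mn \<le> mx" using mnle mxin by auto
  have "1 \<le> mx / mn" using mnp mnmx by simp
  hence Tp: "0 < Tconst K Y PY j" using Tge by linarith
  have "0 < Tconst K Y PY j * condH K Y PY f M j (yj @ [y])" using key assms(9) by linarith
  hence H'p: "0 < condH K Y PY f M j (yj @ [y])" using Tp by (simp add: zero_less_mult_iff)
  have "ln (condH K Y PY f M j yj) \<le> ln (Tconst K Y PY j * condH K Y PY f M j (yj @ [y]))"
    using key assms(9) by simp
  also have "\<dots> = ln (Tconst K Y PY j) + ln (condH K Y PY f M j (yj @ [y]))"
    using Tp H'p by (simp add: ln_mult)
  finally show ?thesis by simp
qed

end
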